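(* Let $k_{\mathcal{A}},k_{\mathcal{W}},k_{\mathcal{Y}}$ be bounded positive semidefinite kernels on $\mathcal{A},\mathcal{W},\mathcal{Y}$ with RKHSs $\mathcal{H}_{\mathcal{A}},\mathcal{H}_{\mathcal{W}},\mathcal{H}_{\mathcal{Y}}$ and canonical features $\phi_{\mathcal{A}},\phi_{\mathcal{W}},\phi_{\mathcal{Y}}$. Let $\mathcal{H}_{\mathcal{A}\mathcal{W}}$ and $\mathcal{H}_{\mathcal{A}\mathcal{Y}}$ be the tensor-product RKHSs with features $\phi_{\mathcal{A}}(a)\otimes\phi_{\mathcal{W}}(w)$ and $\phi_{\mathcal{A}\mathcal{Y}}(a,y)=\phi_{\mathcal{A}}(a)\otimes\phi_{\mathcal{Y}}(y)$, and let $\mathcal{H}_{\mathcal{W}(\mathcal{A}\mathcal{Y})}$ be the space of Hilbert–Schmidt operators $\mathcal{H}_{\mathcal{A}\mathcal{Y}}\to\mathcal{H}_{\mathcal{W}}$. Given stage 1 samples $\{(w_i,a_i,y_i)\}_{i=1}^n$, stage 2 samples $\{(\dot a_i,\dot y_i)\}_{i=1}^m$ and regularization parameters $\lambda,\eta>0$, define $$\hat C_{W|A,Y}=\arg\min_{C\in\mathcal{H}_{\mathcal{W}(\mathcal{A}\mathcal{Y})}}\frac1n\sum_{i=1}^n\|\phi_{\mathcal{W}}(w_i)-C\,\phi_{\mathcal{A}\mathcal{Y}}(a_i,y_i)\|^2_{\mathcal{H}_{\mathcal{W}}}+\lambda\|C\|^2_{\mathcal{H}_{\mathcal{W}(\mathcal{A}\mathcal{Y})}},$$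 $$\hat h=\arg\min_{h\in\mathcal{H}_{\mathcal{A}\mathcal{W}}}\frac1m\sum_{i=1}^m\Big(\dot y_i-\big\langle h,\ \phi_{\mathcal{A}}(\dot a_i)\otimes\hat C_{W|A,Y}\phi_{\mathcal{A}\mathcal{Y}}(\dot a_i,\dot y_i)\big\rangle_{\mathcal{H}_{\mathcal{A}\mathcal{W}}}\Big)^2+\eta\|h\|^2_{\mathcal{H}_{\mathcal{A}\mathcal{W}}}.$$ Then $$\hat h(a,w)=\vec\alpha^\top\vec k(a,w),\qquad \vec\alpha=(M+m\eta I)^{-1}\dot{\vec y},$$ where $\dot{\vec y}=(\dot y_1,\dots,\dot y_m)^\top\in\mathbb{R}^m$, $$M=K_{\dot A\dot A}\odot(B^\top K_{WW}B)\in\mathbb{R}^{m\times m},\quad \vec k(a,w)=\vec k_{\dot A}(a)\odot(B^\top\vec k_W(w))\in\mathbb{R}^m,\quad B=(K_{AA}\odot K_{YY}+n\lambda I)^{-1}(K_{A\dot A}\odot K_{Y\dot Y})\in\mathbb{R}^{n\times m}.$$ Here $K_{AA},K_{WW},K_{YY}\in\mathbb{R}^{n\times n}$ are the stage 1 kernel matrices (e.g. $(K_{AA})_{ij}=k_{\mathcal{A}}(a_i,a_j)$), $K_{\dot A\dot A}=(k_{\mathcal{A}}(\dot a_i,\dot a_j))_{ij}\in\mathbb{R}^{m\times m}$, $K_{A\dot A}=(k_{\mathcal{A}}(a_i,\dot a_j))_{ij}$, $K_{Y\dot Y}=(k_{\mathcal{Y}}(y_i,\dot y_j))_{ij}\in\mathbb{R}^{n\times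 m}$, $\vec k_{\dot A}(a)=(k_{\mathcal{A}}(\dot a_i,a))_{i=1}^m\in\mathbb{R}^m$, and $\vec k_W(w)=(k_{\mathcal{W}}(w_i,w))_{i=1}^n\in\mathbb{R}^n$.
   Context: $\odot$ denotes the entrywise (Hadamard) product; $\otimes$ the tensor product of RKHS elements. *)

theory Defs
  imports "HOL-Analysis.Analysis" "Jordan_Normal_Form.Gauss_Jordan_Elimination"
begin

text \<open>The RKHS of a kernel k on X is represented (up to isometric isomorphism) by a
  Hilbert space H with a feature map phi : X -> H such that
  inner (phi x) (phi y) = k x y and the features span a dense subspace.
  Evaluation of f in H at x is inner f (phi x) (reproducing property).\<close>

definition is_rkhs_feature :: "('x \<Rightarrow> 'x \<Rightarrow> real) \<Rightarrow> ('x \<Rightarrow> 'h::{real_inner,complete_space}) \<Rightarrow> bool" where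
  "is_rkhs_feature k phi \<longleftrightarrow>
     (\<forall>x y. inner (phi x) (phi y) = k x y) \<and> closure (span (range phi)) = UNIV"

definition bounded_kernel :: "('x \<Rightarrow> 'x \<Rightarrow> real) \<Rightarrow> bool" where
  "bounded_kernel k \<longleftrightarrow> (\<exists>B. \<forall>x y. \<bar>k x y\<bar> \<le> B)"

definition psd_kernel :: "('x \<Rightarrow> 'x \<Rightarrow> real) \<Rightarrow> bool" where
  "psd_kernel k \<longleftrightarrow> (\<forall>x y. k x y = k y x) \<and>
     (\<forall>(xs::'x list) (c::real list). length c = length xs \<longrightarrow>
        (\<Sum>i<length xs. \<Sum>j<length xs. c!i * c!j * k (xs!i) (xs!j)) \<ge> 0)"

text \<open>Hilbert-space tensor product: T is a Hilbert space with a bilinear map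
  tens : H1 -> H2 -> T satisfying inner (x (x) y) (x' (x) y') = inner x x' * inner y y'
  whose range spans a dense subspace (characterizes H1 (x) H2 up to unique isometry).\<close>

definition is_tensor_product :: "('h1::{real_inner,complete_space} \<Rightarrow> 'h2::{real_inner,complete_space} \<Rightarrow> 't::{real_inner,complete_space}) \<Rightarrow> bool" where
  "is_tensor_product tens \<longleftrightarrow>
     (\<forall>x. linear (tens x)) \<and> (\<forall>y. linear (\<lambda>x. tens x y)) \<and>
     (\<forall>x y x' y'. inner (tens x y) (tens x' y') = inner x x' * inner y y') \<and>
     closure (span {tens x y | x y. True}) = UNIV"

definition orthonormal_basis :: "'h::{real_inner,complete_space} set \<Rightarrow> bool" where
  "orthonormal_basis E \<longleftrightarrow> (\<forall>e\<in>E. norm e = 1) \<and>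
     (\<forall>e\<in>E. \<forall>f\<in>E. e \<noteq> f \<longrightarrow> inner e f = 0) \<and> closure (span E) = UNIV"

definition some_onb :: "'h::{real_inner,complete_space} set" where
  "some_onb = (SOME E. orthonormal_basis E)"

definition hilbert_schmidt :: "('h1::{real_inner,complete_space} \<Rightarrow> 'h2::{real_inner,complete_space}) \<Rightarrow> bool" where
  "hilbert_schmidt C \<longleftrightarrow> bounded_linear C \<and> (\<lambda>e. (norm (C e))\<^sup>2) summable_on some_onb"

definition hs_norm_sq :: "('h1::{real_inner,complete_space} \<Rightarrow> 'h2::{real_inner,complete_space}) \<Rightarrow> real" where
  "hs_norm_sq C = infsum (\<lambda>e. (norm (C e))\<^sup>2) some_onb"

definition hadamard_mat :: "real mat \<Rightarrow> real mat \<Rightarrow> real mat" (infixl "\<odot>\<^sub>m" 70) where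
  "A \<odot>\<^sub>m B = mat (dim_row A) (dim_col A) (\<lambda>(i,j). A $$ (i,j) * B $$ (i,j))"

definition hadamard_vec :: "real vec \<Rightarrow> real vec \<Rightarrow> real vec" (infixl "\<odot>\<^sub>v" 70) where
  "v \<odot>\<^sub>v u = vec (dim_vec v) (\<lambda>i. v $ i * u $ i)"

definition mat_inv :: "real mat \<Rightarrow> real mat" where
  "mat_inv A = the (mat_inverse A)"

definition kmat :: "('x \<Rightarrow> 'x \<Rightarrow> real) \<Rightarrow> nat \<Rightarrow> (nat \<Rightarrow> 'x) \<Rightarrow> nat \<Rightarrow> (nat \<Rightarrow> 'x) \<Rightarrow> real mat" where
  "kmat k p xs q ys = mat p q (\<lambda>(i,j). k (xs i) (ys j))"

definition kvec :: "('x \<Rightarrow> 'x \<Rightarrow> real) \<Rightarrow> nat \<Rightarrow> (nat \<Rightarrow> 'x) \<Rightarrow> 'x \<Rightarrow> real vec" where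
  "kvec k p xs x = vec p (\<lambda>i. k (xs i) x)"

definition B_matrix where
  "B_matrix kA kY n (a :: nat \<Rightarrow> 'a) (y :: nat \<Rightarrow> real) m (ad :: nat \<Rightarrow> 'a) (yd :: nat \<Rightarrow> real) lam =
     mat_inv ((kmat kA n a n a \<odot>\<^sub>m kmat kY n y n y) + (real n * lam) \<cdot>\<^sub>m 1\<^sub>m n)
       * (kmat kA n a m ad \<odot>\<^sub>m kmat kY n y m yd)"

definition M_matrix where
  "M_matrix kA kW n (w :: nat \<Rightarrow> 'w) m (ad :: nat \<Rightarrow> 'a) B =
     kmat kA m ad m ad \<odot>\<^sub>m (transpose_mat B * kmat kW n w n w * B)"

definition alpha_vec where
  "alpha_vec kA kW n (w :: nat \<Rightarrow> 'w) m (ad :: nat \<Rightarrow> 'a) (yd :: nat \<Rightarrow> real) eta B =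
     mat_inv (M_matrix kA kW n w m ad B + (real m * eta) \<cdot>\<^sub>m 1\<^sub>m m) *\<^sub>v vec m yd"

definition stage1_obj where
  "stage1_obj phiW phiAY n (w :: nat \<Rightarrow> 'w) (a :: nat \<Rightarrow> 'a) (y :: nat \<Rightarrow> real) lam C =
     (1 / real n) * (\<Sum>i<n. (norm (phiW (w i) - C (phiAY (a i) (y i))))\<^sup>2) + lam * hs_norm_sq C"

definition stage2_obj where
  "stage2_obj phiA phiAY tensAW C m (ad :: nat \<Rightarrow> 'a) (yd :: nat \<Rightarrow> real) \<eta> h =
     (1 / real m) * (\<Sum>i<m. (yd i - inner h (tensAW (phiA (ad i)) (C (phiAY (ad i) (yd i)))))\<^sup>2)
     + \<eta> * (norm h)\<^sup>2"

end

theory Submission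
  imports Defs "Jordan_Normal_Form.Determinant"
begin

definition orthonormal :: "'h::real_inner set \<Rightarrow> bool" where
  "orthonormal E \<longleftrightarrow> (\<forall>e\<in>E. norm e = 1) \<and> (\<forall>e\<in>E. \<forall>f\<in>E. e \<noteq> f \<longrightarrow> inner e f = 0)"

lemma orthonormal_inner:
  assumes "orthonormal E" "e \<in> E" "f \<in> E"
  shows "inner e f = (if e = f then 1 else 0)"
proof (cases "e = f")
  case True
  then have "inner e f = (norm e)\<^sup>2" by (simp add: power2_norm_eq_inner)
  then show ?thesis using assms True unfolding orthonormal_def by auto
next
  case False then show ?thesis using assms unfolding orthonormal_def by auto
qed

lemma inner_sum_onb:
  assumes "orthonormal E" "finite G" "G \<subseteq> E" "e0 \<in> G"
  shows "inner (\<Sum>e\<in>G. c e *\<^sub>R e) e0 = c e0"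
proof -
  have "inner (\<Sum>e\<in>G. c e *\<^sub>R e) e0 = (\<Sum>e\<in>G. c e * inner e e0)"
    by (simp add: inner_sum_left)
  also have "\<dots> = (\<Sum>e\<in>G. if e = e0 then c e else 0)"
  proof (intro sum.cong refl)
    fix e assume "e \<in> G"
    then have "e \<in> E" "e0 \<in> E" using assms by auto
    then show "c e * inner e e0 = (if e = e0 then c e else 0)"
      using orthonormal_inner[OF assms(1)] by simp
  qed
  also have "\<dots> = c e0" using assms by simp
  finally show ?thesis .
qed

lemma norm_sum_onb:
  assumes "orthonormal E" "finite G" "G \<subseteq> E"
  shows "(norm (\<Sum>e\<in>G. c e *\<^sub>R e))\<^sup>2 = (\<Sum>e\<in>G. (c e)\<^sup>2)"
proof -
  have "(norm (\<Sum>e\<in>G. c e *\<^sub>R e))\<^sup>2 = inner (\<Sum>e\<in>G. c e *\<^sub>R e) (\<Sum>e\<in>G. c e *\<^sub>R e)"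
    by (simp add: power2_norm_eq_inner)
  also have "\<dots> = (\<Sum>e\<in>G. c e * inner (\<Sum>e\<in>G. c e *\<^sub>R e) e)"
    by (simp add: inner_sum_right)
  also have "\<dots> = (\<Sum>e\<in>G. (c e)\<^sup>2)"
    using assms by (intro sum.cong refl) (auto simp: inner_sum_onb power2_eq_square)
  finally show ?thesis .
qed

lemma bessel_finite:
  assumes "orthonormal E" "finite G" "G \<subseteq> E"
  shows "(\<Sum>e\<in>G. (inner x e)\<^sup>2) \<le> (norm x)\<^sup>2"
proof -
  define s where "s = (\<Sum>e\<in>G. inner x e *\<^sub>R e)"
  have xs: "inner x s = (\<Sum>e\<in>G. (inner x e)\<^sup>2)"
    unfolding s_def by (simp add: inner_sum_right power2_eq_square)
  have ss: "inner s s = (\<Sum>e\<in>G. (inner x e)\<^sup>2)"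
    using norm_sum_onb[OF assms, of "\<lambda>e. inner x e"] unfolding s_def by (simp add: power2_norm_eq_inner)
  have "0 \<le> inner (x - s) (x - s)" by simp
  also have "\<dots> = inner x x - 2 * inner x s + inner s s"
    by (simp add: inner_diff_left inner_diff_right inner_commute)
  finally show ?thesis using xs ss by (simp add: power2_norm_eq_inner)
qed

lemma coeff_sq_summable:
  assumes "orthonormal E"
  shows "(\<lambda>e. (inner x e)\<^sup>2) summable_on E"
  by (rule nonneg_bdd_above_summable_on) (use bessel_finite[OF assms] in \<open>auto intro!: bdd_aboveI[where M="(norm x)\<^sup>2"]\<close>)

lemma summable_by_sq_control:
  fixes f :: "'a \<Rightarrow> 'b::{real_normed_vector,complete_space}" and g :: "'a \<Rightarrow> real"
  assumes g: "g summable_on A" and gnn: "\<And>x. x \<in> A \<Longrightarrow> g x \<ge> 0"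
    and ctrl: "\<And>G. finite G \<Longrightarrow> G \<subseteq> A \<Longrightarrow> (norm (sum f G))\<^sup>2 \<le> sum g G"
  shows "f summable_on A"
proof -
  from g obtain L where lim: "(sum g \<longlongrightarrow> L) (finite_subsets_at_top A)"
    unfolding has_sum_def summable_on_def by blast
  have "\<exists>P. eventually P (finite_subsets_at_top A) \<and>
              (\<forall>F F'. P F \<and> P F' \<longrightarrow> dist (sum f F) (sum f F') < e)" if "e>0" for e
  proof -
    define d P where "d = e\<^sup>2/32" and "P F \<longleftrightarrow> finite F \<and> F \<subseteq> A \<and> dist (sum g F) L < d" for F
    have "d > 0" unfolding d_def using that by simp
    have ev_P: "eventually P (finite_subsets_at_top A)"
      using lim
      by (auto simp add: P_def[abs_def] \<open>0 < d\<close> eventually_conj_iff eventually_finite_subsets_at_top_weakI tendsto_iff)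
    moreover have "dist (sum f F1) (sum f F2) < e" if "P F1" and "P F2" for F1 F2
    proof -
      from ev_P
      obtain F' where "finite F'" and "F' \<subseteq> A" and P_sup_F': "finite F \<and> F \<supseteq> F' \<and> F \<subseteq> A \<Longrightarrow> P F" for F
        by atomize_elim (simp add: eventually_finite_subsets_at_top)
      define F where "F = F' \<union> F1 \<union> F2"
      have "finite F" and "F \<subseteq> A"
        using F_def P_def[abs_def] that \<open>finite F'\<close> \<open>F' \<subseteq> A\<close> by auto
      have dist_F: "dist (sum g F) L < d"
        by (metis F_def \<open>F \<subseteq> A\<close> P_def P_sup_F' \<open>finite F\<close> le_supE order_refl)
      have dist_F_subset: "dist (sum f F) (sum f F') < e/4" if F': "F' \<subseteq> F" "P F'" for F'
      proof -
        have fin': "finite (F - F')" "F - F' \<subseteq> A" using \<open>finite F\<close> \<open>F \<subseteq> A\<close> by auto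
        have "dist (sum f F) (sum f F') = norm (sum f (F-F'))"
          unfolding dist_norm using \<open>finite F\<close> F' by (subst sum_diff) auto
        moreover have "(norm (sum f (F-F')))\<^sup>2 < (e/4)\<^sup>2"
        proof -
          have "(norm (sum f (F-F')))\<^sup>2 \<le> sum g (F - F')" using ctrl[OF fin'] .
          also have "\<dots> = sum g F - sum g F'"
            using \<open>finite F\<close> F' by (subst sum_diff) auto
          also have "\<dots> < 2 * d"
            using dist_F F' unfolding P_def dist_norm real_norm_def by linarith
          also have "\<dots> \<le> (e/4)\<^sup>2" by (simp add: d_def power2_eq_square)
          finally show ?thesis .
        qed
        ultimately show ?thesis
          using power2_less_imp_less[of "norm (sum f (F-F'))" "e/4"] \<open>e > 0\<close> by simp
      qed
      have "dist (sum f F1) (sum f F2) \<le> dist (sum f F) (sum f F1) + dist (sum f F) (sum f F2)"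
        by (rule dist_triangle3)
      also have "\<dots> < e/4 + e/4"
        by (intro add_strict_mono dist_F_subset that) (auto simp: F_def)
      also have "\<dots> \<le> e" using \<open>e > 0\<close> by simp
      finally show "dist (sum f F1) (sum f F2) < e" .
    qed
    ultimately show ?thesis by blast
  qed
  then have "cauchy_filter (filtermap (sum f) (finite_subsets_at_top A))"
    by (simp add: cauchy_filter_metric_filtermap)
  moreover have "complete (UNIV::'b set)"
    by (meson Cauchy_convergent UNIV_I complete_def convergent_def)
  ultimately obtain L' where "(sum f \<longlongrightarrow> L') (finite_subsets_at_top A)"
    using complete_uniform[where S=UNIV] by (force simp add: filterlim_def)
  then show ?thesis
    using summable_on_def has_sum_def by blast
qed

lemma expansion_summable:
  fixes x :: "'h::{real_inner,complete_space}"
  assumes "orthonormal E"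
  shows "(\<lambda>e. inner x e *\<^sub>R e) summable_on E"
  by (rule summable_by_sq_control[OF coeff_sq_summable[OF assms, of x]])
     (use norm_sum_onb[OF assms] in auto)

lemma expansion_inner:
  fixes x :: "'h::{real_inner,complete_space}"
  assumes "orthonormal E" "e0 \<in> E"
  shows "inner (infsum (\<lambda>e. inner x e *\<^sub>R e) E) e0 = inner x e0"
proof -
  have hs: "((\<lambda>e. inner x e *\<^sub>R e) has_sum infsum (\<lambda>e. inner x e *\<^sub>R e) E) E"
    using expansion_summable[OF assms(1)] by (simp add: summable_iff_has_sum_infsum)
  have "((\<lambda>e. inner (inner x e *\<^sub>R e) e0) has_sum inner (infsum (\<lambda>e. inner x e *\<^sub>R e) E) e0) E"
    by (rule has_sum_bounded_linear[OF bounded_linear_inner_left hs])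
  moreover have "((\<lambda>e. inner (inner x e *\<^sub>R e) e0) has_sum inner x e0) E"
  proof -
    have "inner e0 e0 = 1" using orthonormal_inner[OF assms(1) assms(2) assms(2)] by simp
    then have "((\<lambda>e. inner (inner x e *\<^sub>R e) e0) has_sum inner x e0) {e0}"
      using has_sum_finite[of "{e0}" "\<lambda>e. inner (inner x e *\<^sub>R e) e0"] by simp
    then show ?thesis
      by (rule has_sum_cong_neutral[THEN iffD1, rotated -1]) (use assms in \<open>auto simp: orthonormal_inner\<close>)
  qed
  ultimately show ?thesis using has_sum_unique by blast
qed

lemma expansion_in_closure:
  fixes x :: "'h::{real_inner,complete_space}"
  assumes "orthonormal E"
  shows "infsum (\<lambda>e. inner x e *\<^sub>R e) E \<in> closure (span E)"
proof -
  have hs: "((\<lambda>e. inner x e *\<^sub>R e) has_sum infsum (\<lambda>e. inner x e *\<^sub>R e) E) E"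
    using expansion_summable[OF assms(1)] by (simp add: summable_iff_has_sum_infsum)
  show ?thesis
  proof (rule Lim_in_closed_set[OF closed_closure _ finite_subsets_at_top_neq_bot hs[unfolded has_sum_def]])
    show "\<forall>\<^sub>F G in finite_subsets_at_top E. sum (\<lambda>e. inner x e *\<^sub>R e) G \<in> closure (span E)"
      by (rule eventually_finite_subsets_at_top_weakI)
         (meson closure_subset span_scale span_base span_sum subsetD subset_iff)
  qed
qed

lemma orth_closure_span_zero:
  fixes v :: "'h::real_inner"
  assumes "\<And>e. e \<in> E \<Longrightarrow> inner v e = 0" "closure (span E) = UNIV"
  shows "v = 0"
proof -
  have "span E \<subseteq> {y. inner v y = 0}"
    using real_vector.linear_eq_0_on_span[of "inner v" E] assms(1)
    by (auto intro: bounded_linear.linear[OF bounded_linear_inner_right])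
  then have "closure (span E) \<subseteq> {y. inner v y = 0}"
    by (rule closure_minimal) (intro closed_Collect_eq continuous_intros)
  then show ?thesis using assms(2)
    by (metis (mono_tags) UNIV_I inner_eq_zero_iff mem_Collect_eq subsetD)
qed

lemma expansion_has_sum:
  fixes x :: "'h::{real_inner,complete_space}"
  assumes "orthonormal E" "closure (span E) = UNIV"
  shows "((\<lambda>e. inner x e *\<^sub>R e) has_sum x) E"
proof -
  define s where "s = infsum (\<lambda>e. inner x e *\<^sub>R e) E"
  have "x - s = 0"
    by (rule orth_closure_span_zero[OF _ assms(2)])
       (use expansion_inner[OF assms(1)] in \<open>auto simp: s_def inner_diff_left\<close>)
  moreover have "((\<lambda>e. inner x e *\<^sub>R e) has_sum s) E"
    unfolding s_def using expansion_summable[OF assms(1)] by (simp add: summable_iff_has_sum_infsum)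
  ultimately show ?thesis by simp
qed

lemma onb_exists: "\<exists>E::'h::{real_inner,complete_space} set. orthonormal E \<and> closure (span E) = UNIV"
proof -
  let ?A = "{E::'h set. orthonormal E}"
  have "\<forall>C\<in>chains ?A. \<Union>C \<in> ?A"
  proof
    fix C assume C: "C \<in> chains ?A"
    have onC: "orthonormal X" if "X \<in> C" for X using chainsD2[OF C] that by blast
    show "\<Union>C \<in> ?A" unfolding mem_Collect_eq orthonormal_def
    proof (intro conjI ballI impI)
      fix e assume "e \<in> \<Union>C"
      then obtain X where X: "X \<in> C" "e \<in> X" by blast
      show "norm e = 1" using onC[OF X(1)] X(2) unfolding orthonormal_def by blast
    next
      fix e f assume "e \<in> \<Union>C" "f \<in> \<Union>C" "e \<noteq> f"
      then obtain X Y where XY: "X \<in> C" "e \<in> X" "Y \<in> C" "f \<in> Y" by blast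
      have "X \<subseteq> Y \<or> Y \<subseteq> X" using chainsD[OF C XY(1) XY(3)] .
      then show "inner e f = 0"
      proof
        assume "X \<subseteq> Y"
        then show ?thesis using orthonormal_inner[OF onC[OF XY(3)], of e f] XY \<open>e \<noteq> f\<close> by auto
      next
        assume "Y \<subseteq> X"
        then show ?thesis using orthonormal_inner[OF onC[OF XY(1)], of e f] XY \<open>e \<noteq> f\<close> by auto
      qed
    qed
  qed
  from Zorn_Lemma[OF this] obtain M where M0: "M \<in> ?A" and max0: "\<forall>X\<in>?A. M \<subseteq> X \<longrightarrow> X = M"
    by (rule bexE)
  have M: "orthonormal M" using M0 by simp
  have max: "X = M" if "orthonormal X" "M \<subseteq> X" for X using max0 that by simp
  have "closure (span M) = UNIV"
  proof (rule ccontr)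
    assume "closure (span M) \<noteq> UNIV"
    then obtain x where x: "x \<notin> closure (span M)" by blast
    define s where "s = infsum (\<lambda>e. inner x e *\<^sub>R e) M"
    define v where "v = x - s"
    have "s \<in> closure (span M)" unfolding s_def by (rule expansion_in_closure[OF M])
    then have "v \<noteq> 0" using x unfolding v_def by auto
    have vo: "inner v e = 0" if "e \<in> M" for e
      using expansion_inner[OF M that, of x] unfolding v_def s_def by (simp add: inner_diff_left)
    define e' where "e' = v /\<^sub>R norm v"
    have ne': "norm e' = 1" unfolding e'_def using \<open>v \<noteq> 0\<close> by simp
    have oe': "inner e' e = 0" if "e \<in> M" for e
      unfolding e'_def using vo[OF that] by simp
    have on: "orthonormal (insert e' M)" unfolding orthonormal_def
    proof (intro conjI ballI impI)
      fix e assume "e \<in> insert e' M" then show "norm e = 1" using M ne' unfolding orthonormal_def by blast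
    next
      fix e f assume "e \<in> insert e' M" "f \<in> insert e' M" "e \<noteq> f"
      then consider "e = e'" "f \<in> M" | "f = e'" "e \<in> M" | "e \<in> M" "f \<in> M" by blast
      then show "inner e f = 0"
      proof cases
        case 1 then show ?thesis using oe' by simp
      next
        case 2 then show ?thesis using oe'[of e] by (simp add: inner_commute)
      next
        case 3 then show ?thesis using M \<open>e \<noteq> f\<close> unfolding orthonormal_def by blast
      qed
    qed
    have "e' \<notin> M"
    proof
      assume "e' \<in> M"
      then have "inner e' e' = 0" by (rule oe')
      then have "e' = 0" by simp
      then show False using ne' by simp
    qed
    moreover have "insert e' M = M" by (rule max[OF on]) blast
    ultimately show False by blast
  qed
  with M show ?thesis by (intro exI[of _ M]) simp
qed

lemma some_onb_props:
  "orthonormal (some_onb :: 'h::{real_inner,complete_space} set)"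
  "closure (span (some_onb :: 'h::{real_inner,complete_space} set)) = UNIV"
proof -
  have "\<exists>E::'h set. orthonormal_basis E"
    using onb_exists unfolding orthonormal_basis_def orthonormal_def by blast
  then have "orthonormal_basis (some_onb :: 'h set)"
    unfolding some_onb_def by (rule someI_ex)
  then show "orthonormal (some_onb :: 'h set)" "closure (span (some_onb :: 'h set)) = UNIV"
    unfolding orthonormal_basis_def orthonormal_def by auto
qed

lemma summable_real_le:
  fixes f g :: "'a \<Rightarrow> real"
  assumes "g summable_on A" "\<And>x. x \<in> A \<Longrightarrow> \<bar>f x\<bar> \<le> g x"
  shows "f summable_on A"
proof -
  have "(\<lambda>x. norm (g x)) summable_on A" using assms(1) summable_on_iff_abs_summable_on_real by blast
  then have "(\<lambda>x. norm (f x)) summable_on A"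
    by (rule Infinite_Sum.abs_summable_on_comparison_test) (use assms(2) in force)
  then show ?thesis using summable_on_iff_abs_summable_on_real by blast
qed

lemma norm_add_sq_le: "(norm (a + b :: 'a::real_inner))\<^sup>2 \<le> 2 * (norm a)\<^sup>2 + 2 * (norm b)\<^sup>2"
proof -
  have "(norm (a + b))\<^sup>2 + (norm (a - b))\<^sup>2 = 2 * (norm a)\<^sup>2 + 2 * (norm b)\<^sup>2"
    by (simp add: power2_norm_eq_inner inner_add_left inner_add_right inner_diff_left inner_diff_right inner_commute)
  moreover have "0 \<le> (norm (a - b))\<^sup>2" by simp
  ultimately show ?thesis by linarith
qed

lemma norm_diff_sq_le: "(norm (a - b :: 'a::real_inner))\<^sup>2 \<le> 2 * (norm a)\<^sup>2 + 2 * (norm b)\<^sup>2"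
  using norm_add_sq_le[of a "-b"] by simp

lemma hs_add:
  fixes A B :: "'h1::{real_inner,complete_space} \<Rightarrow> 'h2::{real_inner,complete_space}"
  assumes "hilbert_schmidt A" "hilbert_schmidt B"
  shows "hilbert_schmidt (\<lambda>x. A x + B x)"
  unfolding hilbert_schmidt_def
proof
  show "bounded_linear (\<lambda>x. A x + B x)"
    using assms unfolding hilbert_schmidt_def by (auto intro: bounded_linear_add)
  have "(\<lambda>e. 2 * (norm (A e))\<^sup>2 + 2 * (norm (B e))\<^sup>2) summable_on some_onb"
    using assms unfolding hilbert_schmidt_def by (intro summable_on_add summable_on_cmult_right) auto
  then show "(\<lambda>e. (norm (A e + B e))\<^sup>2) summable_on some_onb"
    by (rule summable_real_le) (simp add: norm_add_sq_le)
qed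

lemma hs_diff:
  fixes A B :: "'h1::{real_inner,complete_space} \<Rightarrow> 'h2::{real_inner,complete_space}"
  assumes "hilbert_schmidt A" "hilbert_schmidt B"
  shows "hilbert_schmidt (\<lambda>x. A x - B x)"
  unfolding hilbert_schmidt_def
proof
  show "bounded_linear (\<lambda>x. A x - B x)"
    using assms unfolding hilbert_schmidt_def by (auto intro: bounded_linear_sub)
  have "(\<lambda>e. 2 * (norm (A e))\<^sup>2 + 2 * (norm (B e))\<^sup>2) summable_on some_onb"
    using assms unfolding hilbert_schmidt_def by (intro summable_on_add summable_on_cmult_right) auto
  then show "(\<lambda>e. (norm (A e - B e))\<^sup>2) summable_on some_onb"
    by (rule summable_real_le) (simp add: norm_diff_sq_le)
qed

lemma hs_zero: "hilbert_schmidt (\<lambda>x::'h1::{real_inner,complete_space}. 0::'h2::{real_inner,complete_space})"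
  unfolding hilbert_schmidt_def by (simp add: bounded_linear_zero)

lemma hs_sum:
  fixes F :: "'j \<Rightarrow> 'h1::{real_inner,complete_space} \<Rightarrow> 'h2::{real_inner,complete_space}"
  assumes "finite J" "\<And>j. j \<in> J \<Longrightarrow> hilbert_schmidt (F j)"
  shows "hilbert_schmidt (\<lambda>x. \<Sum>j\<in>J. F j x)"
  using assms
proof (induction J rule: finite_induct)
  case empty then show ?case using hs_zero by simp
next
  case (insert j J)
  then show ?case using hs_add[of "F j" "\<lambda>x. \<Sum>j\<in>J. F j x"] by simp
qed

lemma hs_rank_one:
  fixes u :: "'h1::{real_inner,complete_space}" and z :: "'h2::{real_inner,complete_space}"
  shows "hilbert_schmidt (\<lambda>x. inner u x *\<^sub>R z)"
  unfolding hilbert_schmidt_def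
proof
  show "bounded_linear (\<lambda>x. inner u x *\<^sub>R z)"
    by (rule bounded_linear_compose[OF bounded_linear_scaleR_left bounded_linear_inner_right])
  have "(\<lambda>e. (inner u e)\<^sup>2 * (norm z)\<^sup>2) summable_on some_onb"
    by (intro summable_on_cmult_left coeff_sq_summable some_onb_props)
  then show "(\<lambda>e. (norm (inner u e *\<^sub>R z))\<^sup>2) summable_on some_onb"
    by (simp add: power_mult_distrib)
qed

lemma hs_inner_summable:
  fixes A B :: "'h1::{real_inner,complete_space} \<Rightarrow> 'h2::{real_inner,complete_space}"
  assumes "hilbert_schmidt A" "hilbert_schmidt B"
  shows "(\<lambda>e. inner (A e) (B e)) summable_on some_onb"
proof -
  have "(\<lambda>e. (norm (A e))\<^sup>2 + (norm (B e))\<^sup>2) summable_on some_onb"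
    using assms unfolding hilbert_schmidt_def by (intro summable_on_add) auto
  then show ?thesis
  proof (rule summable_real_le)
    fix e
    have "\<bar>inner (A e) (B e)\<bar> \<le> norm (A e) * norm (B e)" by (rule Cauchy_Schwarz_ineq2)
    also have "\<dots> \<le> (norm (A e))\<^sup>2 + (norm (B e))\<^sup>2"
      using sum_squares_bound[of "norm (A e)" "norm (B e)"] mult_nonneg_nonneg[OF norm_ge_zero norm_ge_zero, of "A e" "B e"]
      by linarith
    finally show "\<bar>inner (A e) (B e)\<bar> \<le> (norm (A e))\<^sup>2 + (norm (B e))\<^sup>2" .
  qed
qed

lemma hs_norm_sq_add:
  fixes A B :: "'h1::{real_inner,complete_space} \<Rightarrow> 'h2::{real_inner,complete_space}"
  assumes "hilbert_schmidt A" "hilbert_schmidt B"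
  shows "hs_norm_sq (\<lambda>x. A x + B x) = hs_norm_sq A + 2 * infsum (\<lambda>e. inner (A e) (B e)) some_onb + hs_norm_sq B"
proof -
  have pt: "(norm (A e + B e))\<^sup>2 = (norm (A e))\<^sup>2 + 2 * inner (A e) (B e) + (norm (B e))\<^sup>2" for e
    by (simp add: power2_norm_eq_inner inner_add_left inner_add_right inner_commute)
  have sA: "(\<lambda>e. (norm (A e))\<^sup>2) summable_on some_onb" and sB: "(\<lambda>e. (norm (B e))\<^sup>2) summable_on some_onb"
    using assms unfolding hilbert_schmidt_def by auto
  have sI: "(\<lambda>e. 2 * inner (A e) (B e)) summable_on some_onb"
    by (intro summable_on_cmult_right hs_inner_summable assms)
  have "hs_norm_sq (\<lambda>x. A x + B x) = infsum (\<lambda>e. ((norm (A e))\<^sup>2 + 2 * inner (A e) (B e)) + (norm (B e))\<^sup>2) some_onb"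
    unfolding hs_norm_sq_def pt ..
  also have "\<dots> = infsum (\<lambda>e. (norm (A e))\<^sup>2 + 2 * inner (A e) (B e)) some_onb + infsum (\<lambda>e. (norm (B e))\<^sup>2) some_onb"
    by (rule infsum_add) (use sA sB sI in \<open>auto intro: summable_on_add\<close>)
  also have "infsum (\<lambda>e. (norm (A e))\<^sup>2 + 2 * inner (A e) (B e)) some_onb
      = infsum (\<lambda>e. (norm (A e))\<^sup>2) some_onb + infsum (\<lambda>e. 2 * inner (A e) (B e)) some_onb"
    by (rule infsum_add) (use sA sI in auto)
  also have "infsum (\<lambda>e. 2 * inner (A e) (B e)) some_onb = 2 * infsum (\<lambda>e. inner (A e) (B e)) some_onb"
    by (rule infsum_cmult_right) (intro hs_inner_summable assms)
  finally show ?thesis unfolding hs_norm_sq_def by simp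
qed

lemma hs_norm_sq_nonneg: "hs_norm_sq C \<ge> 0"
  unfolding hs_norm_sq_def by (rule infsum_nonneg) simp

lemma hs_norm_sq_zero:
  fixes D :: "'h1::{real_inner,complete_space} \<Rightarrow> 'h2::{real_inner,complete_space}"
  assumes "hilbert_schmidt D" "hs_norm_sq D \<le> 0"
  shows "D = (\<lambda>x. 0)"
proof -
  have bl: "bounded_linear D" and s: "(\<lambda>e. (norm (D e))\<^sup>2) summable_on some_onb"
    using assms(1) unfolding hilbert_schmidt_def by auto
  have "(norm (D e))\<^sup>2 = 0" if "e \<in> some_onb" for e
    using nonneg_infsum_le_0D[OF assms(2)[unfolded hs_norm_sq_def] s _ that] by simp
  then have z: "D e = 0" if "e \<in> some_onb" for e using that by simp
  have "span some_onb \<subseteq> {x. D x = 0}"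
    using real_vector.linear_eq_0_on_span[of D some_onb] z bounded_linear.linear[OF bl] by auto
  then have "closure (span some_onb) \<subseteq> {x. D x = 0}"
    by (rule closure_minimal) (intro closed_Collect_eq linear_continuous_on[OF bl] continuous_on_const)
  then show ?thesis using some_onb_props(2) by auto
qed

lemma has_sum_finite_sum:
  fixes f :: "'j \<Rightarrow> 'a \<Rightarrow> 'b::{topological_comm_monoid_add}"
  assumes "finite J" "\<And>j. j \<in> J \<Longrightarrow> (f j has_sum s j) A"
  shows "((\<lambda>x. \<Sum>j\<in>J. f j x) has_sum (\<Sum>j\<in>J. s j)) A"
  using assms
proof (induction J rule: finite_induct)
  case empty then show ?case by simp
next
  case (insert j J)
  then show ?case by (simp add: has_sum_add)
qed

lemma hs_inner_rank_one:
  fixes u :: "'h1::{real_inner,complete_space}" and z :: "'h2::{real_inner,complete_space}"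
  assumes "bounded_linear D"
  shows "((\<lambda>e. inner u e * inner z (D e)) has_sum inner z (D u)) some_onb"
proof -
  have bl: "bounded_linear (\<lambda>v. inner z (D v))"
    by (rule bounded_linear_compose[OF bounded_linear_inner_right assms])
  from has_sum_bounded_linear[OF bl expansion_has_sum[OF some_onb_props, of u]]
  show ?thesis using linear_cmul[OF bounded_linear.linear[OF assms]] by simp
qed

lemma norm_diff_sq_eq: "(norm (p - q :: 'a::real_inner))\<^sup>2 = (norm p)\<^sup>2 - 2 * inner p q + (norm q)\<^sup>2"
  by (simp add: power2_norm_eq_inner inner_diff_left inner_diff_right inner_commute)

lemma stage1_abstract:
  fixes u :: "nat \<Rightarrow> 'h1::{real_inner,complete_space}" and r z :: "nat \<Rightarrow> 'h2::{real_inner,complete_space}"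
    and n :: nat and lam :: real
  assumes n: "n > 0" and lam: "lam > 0"
    and zeq: "\<And>i. i < n \<Longrightarrow> (real n * lam) *\<^sub>R z i + (\<Sum>j<n. inner (u j) (u i) *\<^sub>R z j) = r i"
  defines "C0 \<equiv> (\<lambda>x. \<Sum>j<n. inner (u j) x *\<^sub>R z j)"
  defines "obj \<equiv> (\<lambda>C. (1 / real n) * (\<Sum>i<n. (norm (r i - C (u i)))\<^sup>2) + lam * hs_norm_sq C)"
  shows "hilbert_schmidt C0"
    and "\<And>C. hilbert_schmidt C \<Longrightarrow> obj C0 \<le> obj C"
    and "\<And>C. hilbert_schmidt C \<Longrightarrow> obj C \<le> obj C0 \<Longrightarrow> C = C0"
proof -
  show hsC0: "hilbert_schmidt C0"
    unfolding C0_def by (intro hs_sum hs_rank_one) simp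
  have decomp: "obj C = obj C0 + (1 / real n) * (\<Sum>i<n. (norm (C (u i) - C0 (u i)))\<^sup>2) + lam * hs_norm_sq (\<lambda>x. C x - C0 x)"
    if hsC: "hilbert_schmidt C" for C
  proof -
    define D where "D = (\<lambda>x. C x - C0 x)"
    have hsD: "hilbert_schmidt D" unfolding D_def by (rule hs_diff[OF hsC hsC0])
    have blD: "bounded_linear D" using hsD unfolding hilbert_schmidt_def by simp
    have CD: "C = (\<lambda>x. C0 x + D x)" unfolding D_def by simp
    have I: "infsum (\<lambda>e. inner (C0 e) (D e)) some_onb = (\<Sum>j<n. inner (z j) (D (u j)))"
    proof -
      have "((\<lambda>e. \<Sum>j<n. inner (u j) e * inner (z j) (D e)) has_sum (\<Sum>j<n. inner (z j) (D (u j)))) some_onb"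
        by (rule has_sum_finite_sum) (auto intro: hs_inner_rank_one[OF blD])
      moreover have "(\<lambda>e. inner (C0 e) (D e)) = (\<lambda>e. \<Sum>j<n. inner (u j) e * inner (z j) (D e))"
        unfolding C0_def by (simp add: inner_sum_left)
      ultimately show ?thesis by (metis infsumI)
    qed
    have hsC: "hs_norm_sq C = hs_norm_sq C0 + 2 * (\<Sum>j<n. inner (z j) (D (u j))) + hs_norm_sq D"
      unfolding CD by (subst hs_norm_sq_add[OF hsC0 hsD]) (simp add: I)
    have res: "r i - C0 (u i) = (real n * lam) *\<^sub>R z i" if "i < n" for i
      using zeq[OF that] unfolding C0_def by (simp add: algebra_simps)
    have pt: "(norm (r i - C (u i)))\<^sup>2 = (norm (r i - C0 (u i)))\<^sup>2 - 2 * (real n * lam) * inner (z i) (D (u i)) + (norm (D (u i)))\<^sup>2"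
      if "i < n" for i
    proof -
      have "r i - C (u i) = (r i - C0 (u i)) - D (u i)" unfolding CD by simp
      then have "(norm (r i - C (u i)))\<^sup>2 = (norm (r i - C0 (u i)))\<^sup>2 - 2 * inner (r i - C0 (u i)) (D (u i)) + (norm (D (u i)))\<^sup>2"
        by (simp only: norm_diff_sq_eq)
      then show ?thesis using res[OF that] by simp
    qed
    have "(\<Sum>i<n. (norm (r i - C (u i)))\<^sup>2) = (\<Sum>i<n. (norm (r i - C0 (u i)))\<^sup>2) - 2 * (real n * lam) * (\<Sum>i<n. inner (z i) (D (u i))) + (\<Sum>i<n. (norm (D (u i)))\<^sup>2)"
      by (simp add: pt sum.distrib sum_subtractf sum_distrib_left)
    then have "obj C = (1 / real n) * ((\<Sum>i<n. (norm (r i - C0 (u i)))\<^sup>2) - 2 * (real n * lam) * (\<Sum>i<n. inner (z i) (D (u i))) + (\<Sum>i<n. (norm (D (u i)))\<^sup>2))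
        + lam * (hs_norm_sq C0 + 2 * (\<Sum>j<n. inner (z j) (D (u j))) + hs_norm_sq D)"
      unfolding obj_def hsC by simp
    also have "\<dots> = obj C0 + (1 / real n) * (\<Sum>i<n. (norm (D (u i)))\<^sup>2) + lam * hs_norm_sq D"
      unfolding obj_def using n by (simp add: field_simps)
    finally show ?thesis unfolding D_def .
  qed
  have extra_nonneg: "0 \<le> (1 / real n) * (\<Sum>i<n. (norm (C (u i) - C0 (u i)))\<^sup>2)" for C
    by (intro mult_nonneg_nonneg sum_nonneg) auto
  show "obj C0 \<le> obj C" if "hilbert_schmidt C" for C
  proof -
    have "0 \<le> lam * hs_norm_sq (\<lambda>x. C x - C0 x)"
      using lam hs_norm_sq_nonneg[of "\<lambda>x. C x - C0 x"] by simp
    then show ?thesis using decomp[OF that] extra_nonneg[of C] by linarith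
  qed
  show "C = C0" if "hilbert_schmidt C" "obj C \<le> obj C0" for C
  proof -
    have "lam * hs_norm_sq (\<lambda>x. C x - C0 x) \<le> 0"
      using decomp[OF that(1)] extra_nonneg[of C] that(2) by linarith
    then have "hs_norm_sq (\<lambda>x. C x - C0 x) \<le> 0" using lam by (simp add: mult_le_0_iff)
    then have "(\<lambda>x. C x - C0 x) = (\<lambda>x. 0)"
      by (intro hs_norm_sq_zero hs_diff that(1) hsC0)
    then have "C x - C0 x = 0" for x by (rule fun_cong[where x=x, THEN trans]) simp
    then show ?thesis by (intro ext) simp
  qed
qed

lemma stage2_abstract:
  fixes psi :: "nat \<Rightarrow> 'h::real_inner" and t alpha :: "nat \<Rightarrow> real" and m :: nat and eta :: real
  assumes m: "m > 0" and eta: "eta > 0"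
    and aeq: "\<And>i. i < m \<Longrightarrow> (\<Sum>j<m. inner (psi i) (psi j) * alpha j) + real m * eta * alpha i = t i"
  defines "h0 \<equiv> (\<Sum>j<m. alpha j *\<^sub>R psi j)"
  defines "J \<equiv> (\<lambda>h. (1 / real m) * (\<Sum>i<m. (t i - inner h (psi i))\<^sup>2) + eta * (norm h)\<^sup>2)"
  shows "J h0 \<le> J h" and "J h \<le> J h0 \<Longrightarrow> h = h0"
proof -
  have decomp: "J h = J h0 + (1 / real m) * (\<Sum>i<m. (inner (h - h0) (psi i))\<^sup>2) + eta * (norm (h - h0))\<^sup>2" for h
  proof -
    define d where "d = h - h0"
    have hd: "h = h0 + d" unfolding d_def by simp
    have r: "t i - inner h0 (psi i) = real m * eta * alpha i" if "i < m" for i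
    proof -
      have "inner h0 (psi i) = (\<Sum>j<m. inner (psi i) (psi j) * alpha j)"
        unfolding h0_def inner_sum_left
        by (intro sum.cong refl) (simp add: inner_commute mult.commute)
      then show ?thesis using aeq[OF that] by simp
    qed
    have pt: "(t i - inner h (psi i))\<^sup>2 = (t i - inner h0 (psi i))\<^sup>2 - 2 * (real m * eta) * (alpha i * inner d (psi i)) + (inner d (psi i))\<^sup>2"
      if "i < m" for i
    proof -
      have "t i - inner h (psi i) = (t i - inner h0 (psi i)) - inner d (psi i)" unfolding hd by (simp add: inner_add_left)
      then show ?thesis using r[OF that] by (simp add: power2_diff)
    qed
    have nh: "(norm h)\<^sup>2 = (norm h0)\<^sup>2 + 2 * (\<Sum>j<m. alpha j * inner d (psi j)) + (norm d)\<^sup>2"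
    proof -
      have "inner h0 d = (\<Sum>j<m. alpha j * inner d (psi j))"
        unfolding h0_def inner_sum_left
        by (intro sum.cong refl) (simp add: inner_commute)
      then show ?thesis unfolding hd
        by (simp add: power2_norm_eq_inner inner_add_left inner_add_right inner_commute)
    qed
    have "(\<Sum>i<m. (t i - inner h (psi i))\<^sup>2) = (\<Sum>i<m. (t i - inner h0 (psi i))\<^sup>2) - 2 * (real m * eta) * (\<Sum>i<m. alpha i * inner d (psi i)) + (\<Sum>i<m. (inner d (psi i))\<^sup>2)"
      by (simp add: pt sum.distrib sum_subtractf sum_distrib_left)
    then have "J h = (1 / real m) * ((\<Sum>i<m. (t i - inner h0 (psi i))\<^sup>2) - 2 * (real m * eta) * (\<Sum>i<m. alpha i * inner d (psi i)) + (\<Sum>i<m. (inner d (psi i))\<^sup>2))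
       + eta * ((norm h0)\<^sup>2 + 2 * (\<Sum>j<m. alpha j * inner d (psi j)) + (norm d)\<^sup>2)"
      unfolding J_def nh by simp
    also have "\<dots> = J h0 + (1 / real m) * (\<Sum>i<m. (inner d (psi i))\<^sup>2) + eta * (norm d)\<^sup>2"
      unfolding J_def using m by (simp add: field_simps)
    finally show ?thesis unfolding d_def .
  qed
  have nn: "0 \<le> (1 / real m) * (\<Sum>i<m. (inner (h - h0) (psi i))\<^sup>2)"
    by (intro mult_nonneg_nonneg sum_nonneg) auto
  have nn2: "0 \<le> eta * (norm (h - h0))\<^sup>2" using eta by simp
  show "J h0 \<le> J h" using decomp[of h] nn nn2 by linarith
  show "h = h0" if "J h \<le> J h0"
  proof -
    have "eta * (norm (h - h0))\<^sup>2 \<le> 0" using decomp[of h] nn that by linarith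
    then have "(norm (h - h0))\<^sup>2 \<le> 0" using eta by (simp add: mult_le_0_iff)
    then show ?thesis by simp
  qed
qed

lemma kmat_carrier: "kmat k p xs q ys \<in> carrier_mat p q"
  unfolding kmat_def by simp

lemma kmat_index: "i < p \<Longrightarrow> j < q \<Longrightarrow> kmat k p xs q ys $$ (i,j) = k (xs i) (ys j)"
  unfolding kmat_def by simp

lemma kvec_carrier: "kvec k p xs x \<in> carrier_vec p"
  unfolding kvec_def by simp

lemma kvec_index: "i < p \<Longrightarrow> (kvec k p xs x :: real vec) $ i = k (xs i) x"
  unfolding kvec_def by simp


lemma hadamard_mat_carrier: "A \<in> carrier_mat p q \<Longrightarrow> A \<odot>\<^sub>m B \<in> carrier_mat p q"
  unfolding hadamard_mat_def by auto

lemma hadamard_mat_index: "A \<in> carrier_mat p q \<Longrightarrow> i < p \<Longrightarrow> j < q \<Longrightarrow> (A \<odot>\<^sub>m B) $$ (i,j) = A $$ (i,j) * B $$ (i,j)"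
  unfolding hadamard_mat_def by auto

lemma hadamard_vec_carrier: "(v::real vec) \<in> carrier_vec p \<Longrightarrow> v \<odot>\<^sub>v u \<in> carrier_vec p"
  unfolding hadamard_vec_def by auto

lemma hadamard_vec_index: "(v::real vec) \<in> carrier_vec p \<Longrightarrow> i < p \<Longrightarrow> (v \<odot>\<^sub>v u) $ i = v $ i * u $ i"
  unfolding hadamard_vec_def by auto

lemma mult_index_sum:
  fixes A B :: "real mat"
  assumes "A \<in> carrier_mat p q" "B \<in> carrier_mat q r" "i < p" "j < r"
  shows "(A * B) $$ (i,j) = (\<Sum>l<q. A $$ (i,l) * B $$ (l,j))"
  using assms by (simp add: scalar_prod_def atLeast0LessThan)

lemma mult_vec_index_sum:
  fixes A :: "real mat"
  assumes "A \<in> carrier_mat p q" "v \<in> carrier_vec q" "i < p"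
  shows "(A *\<^sub>v v) $ i = (\<Sum>l<q. A $$ (i,l) * v $ l)"
  using assms by (simp add: scalar_prod_def atLeast0LessThan)

lemma scalar_prod_sum:
  fixes v w :: "real vec"
  assumes "v \<in> carrier_vec q" "w \<in> carrier_vec q"
  shows "v \<bullet> w = (\<Sum>l<q. v $ l * w $ l)"
  using assms by (simp add: scalar_prod_def atLeast0LessThan)

lemma gram_inv:
  fixes G :: "real mat" and g :: "nat \<Rightarrow> 'h::real_inner" and c :: real
  assumes G: "G \<in> carrier_mat k k"
    and Gij: "\<And>i j. i < k \<Longrightarrow> j < k \<Longrightarrow> G $$ (i,j) = inner (g i) (g j) + (if i = j then c else 0)"
    and c: "c > 0"
  shows "G * mat_inv G = 1\<^sub>m k" "mat_inv G * G = 1\<^sub>m k" "mat_inv G \<in> carrier_mat k k"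
proof -
  have "det G \<noteq> 0"
  proof
    assume "det G = 0"
    then obtain v where v: "v \<in> carrier_vec k" "v \<noteq> 0\<^sub>v k" "G *\<^sub>v v = 0\<^sub>v k"
      using det_0_iff_vec_prod_zero_field[OF G] by blast
    have Gv: "(G *\<^sub>v v) $ i = (\<Sum>j<k. inner (g i) (g j) * v $ j) + c * v $ i" if "i < k" for i
    proof -
      have "(G *\<^sub>v v) $ i = (\<Sum>j<k. (inner (g i) (g j) + (if i = j then c else 0)) * v $ j)"
        using mult_vec_index_sum[OF G v(1) that] Gij[OF that] by simp
      also have "\<dots> = (\<Sum>j<k. inner (g i) (g j) * v $ j) + (\<Sum>j<k. (if i = j then c else 0) * v $ j)"
        by (simp add: distrib_right sum.distrib)
      also have "(\<Sum>j<k. (if i = j then c else 0) * v $ j) = c * v $ i"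
      proof -
        have "(\<Sum>j<k. (if i = j then c else 0) * v $ j) = (\<Sum>j<k. if i = j then c * v $ i else 0)"
          by (rule sum.cong) auto
        also have "\<dots> = c * v $ i" using that by simp
        finally show ?thesis .
      qed
      finally show ?thesis .
    qed
    define s where "s = (\<Sum>i<k. v $ i *\<^sub>R g i)"
    have "0 = (\<Sum>i<k. v $ i * (G *\<^sub>v v) $ i)" using v(3) by simp
    also have "\<dots> = (\<Sum>i<k. \<Sum>j<k. v $ i * v $ j * inner (g i) (g j)) + c * (\<Sum>i<k. (v $ i)\<^sup>2)"
      by (simp add: Gv distrib_left sum.distrib sum_distrib_left power2_eq_square mult_ac)
    also have "(\<Sum>i<k. \<Sum>j<k. v $ i * v $ j * inner (g i) (g j)) = inner s s"
      unfolding s_def by (simp add: inner_sum_left inner_sum_right sum_distrib_left mult_ac)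
        (intro sum.cong refl, simp add: inner_commute)
    finally have eq: "inner s s + c * (\<Sum>i<k. (v $ i)\<^sup>2) = 0" by simp
    have "inner s s \<ge> 0" by simp
    moreover have "(\<Sum>i<k. (v $ i)\<^sup>2) \<ge> 0" by (simp add: sum_nonneg)
    ultimately have "c * (\<Sum>i<k. (v $ i)\<^sup>2) = 0" using eq c
      by (smt (verit) mult_nonneg_nonneg)
    then have "(\<Sum>i<k. (v $ i)\<^sup>2) = 0" using c by simp
    then have "\<forall>i\<in>{..<k}. (v $ i)\<^sup>2 = 0" by (subst (asm) sum_nonneg_eq_0_iff) auto
    then have "v = 0\<^sub>v k" using v(1) by (intro eq_vecI) auto
    with v(2) show False by simp
  qed
  then have U: "G \<in> Units (ring_mat TYPE(real) k ())" by (rule det_non_zero_imp_unit[OF G])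
  have "mat_inverse G \<noteq> None"
  proof
    assume "mat_inverse G = None"
    from mat_inverse(1)[OF G this, of "()"] U show False by simp
  qed
  then obtain B where B: "mat_inverse G = Some B" by blast
  then have "mat_inv G = B" unfolding mat_inv_def by simp
  then show "G * mat_inv G = 1\<^sub>m k" "mat_inv G * G = 1\<^sub>m k" "mat_inv G \<in> carrier_mat k k"
    using mat_inverse(2)[OF G B] by auto
qed

theorem theorem2:
  fixes kA :: "'a \<Rightarrow> 'a \<Rightarrow> real" and kW :: "'w \<Rightarrow> 'w \<Rightarrow> real" and kY :: "real \<Rightarrow> real \<Rightarrow> real"
    and phiA :: "'a \<Rightarrow> 'ha::{real_inner,complete_space}"
    and phiW :: "'w \<Rightarrow> 'hw::{real_inner,complete_space}"
    and phiY :: "real \<Rightarrow> 'hy::{real_inner,complete_space}"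
    and tensAW :: "'ha \<Rightarrow> 'hw \<Rightarrow> 'haw::{real_inner,complete_space}"
    and tensAY :: "'ha \<Rightarrow> 'hy \<Rightarrow> 'hay::{real_inner,complete_space}"
    and n m :: nat
    and w :: "nat \<Rightarrow> 'w" and a :: "nat \<Rightarrow> 'a" and y :: "nat \<Rightarrow> real"
    and ad :: "nat \<Rightarrow> 'a" and yd :: "nat \<Rightarrow> real"
    and lam \<eta> :: real
  assumes kernels: "psd_kernel kA" "psd_kernel kW" "psd_kernel kY"
    and bounded: "bounded_kernel kA" "bounded_kernel kW" "bounded_kernel kY"
    and rkhs: "is_rkhs_feature kA phiA" "is_rkhs_feature kW phiW" "is_rkhs_feature kY phiY"
    and tensors: "is_tensor_product tensAW" "is_tensor_product tensAY"
    and n_pos: "n > 0" and m_pos: "m > 0"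
    and reg: "lam > 0" "\<eta> > 0"
  defines "phiAY \<equiv> (\<lambda>a' y'. tensAY (phiA a') (phiY y'))"
    and "Bm \<equiv> B_matrix kA kY n a y m ad yd lam"
    and "\<alpha> \<equiv> alpha_vec kA kW n w m ad yd \<eta> (B_matrix kA kY n a y m ad yd lam)"
  shows "(\<exists>C. hilbert_schmidt C \<and>
            (\<forall>C'. hilbert_schmidt C' \<longrightarrow> stage1_obj phiW phiAY n w a y lam C \<le> stage1_obj phiW phiAY n w a y lam C'))
       \<and> (\<forall>C. hilbert_schmidt C \<and>
            (\<forall>C'. hilbert_schmidt C' \<longrightarrow> stage1_obj phiW phiAY n w a y lam C \<le> stage1_obj phiW phiAY n w a y lam C')
          \<longrightarrow> (\<exists>h. \<forall>h'. stage2_obj phiA phiAY tensAW C m ad yd \<eta> h \<le> stage2_obj phiA phiAY tensAW C m ad yd \<eta> h')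
            \<and> (\<forall>h. (\<forall>h'. stage2_obj phiA phiAY tensAW C m ad yd \<eta> h \<le> stage2_obj phiA phiAY tensAW C m ad yd \<eta> h')
                 \<longrightarrow> (\<forall>a0 w0. inner h (tensAW (phiA a0) (phiW w0))
                        = \<alpha> \<bullet> (kvec kA m ad a0 \<odot>\<^sub>v (transpose_mat Bm *\<^sub>v kvec kW n w w0)))))"
proof -
  have ipA: "\<And>x x'. inner (phiA x) (phiA x') = kA x x'" using rkhs(1) unfolding is_rkhs_feature_def by blast
  have ipW: "\<And>x x'. inner (phiW x) (phiW x') = kW x x'" using rkhs(2) unfolding is_rkhs_feature_def by blast
  have ipY: "\<And>x x'. inner (phiY x) (phiY x') = kY x x'" using rkhs(3) unfolding is_rkhs_feature_def by blast
  have tAW: "\<And>x y x' y'. inner (tensAW x y) (tensAW x' y') = inner x x' * inner y y'"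
    using tensors(1) unfolding is_tensor_product_def by blast
  have tAY: "\<And>x y x' y'. inner (tensAY x y) (tensAY x' y') = inner x x' * inner y y'"
    using tensors(2) unfolding is_tensor_product_def by blast
  have ipAY: "\<And>a1 y1 a2 y2. inner (phiAY a1 y1) (phiAY a2 y2) = kA a1 a2 * kY y1 y2"
    unfolding phiAY_def by (simp add: tAY ipA ipY)
  define u where "u = (\<lambda>i. phiAY (a i) (y i))"
  define r where "r = (\<lambda>i. phiW (w i))"
  define v where "v = (\<lambda>l. phiAY (ad l) (yd l))"
  define A1 where "A1 = (kmat kA n a n a \<odot>\<^sub>m kmat kY n y n y) + (real n * lam) \<cdot>\<^sub>m 1\<^sub>m n"
  define P where "P = mat_inv A1"
  define L where "L = kmat kA n a m ad \<odot>\<^sub>m kmat kY n y m yd"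
  have Bm_eq: "Bm = P * L" unfolding Bm_def B_matrix_def P_def A1_def L_def ..
  have A1c: "A1 \<in> carrier_mat n n" unfolding A1_def hadamard_mat_def kmat_def by auto
  have A1ij: "A1 $$ (i,j) = inner (u i) (u j) + (if i = j then real n * lam else 0)" if "i < n" "j < n" for i j
    using that unfolding A1_def by (simp add: hadamard_mat_def kmat_def u_def ipAY)
  have nl: "real n * lam > 0" using n_pos reg by simp
  note G1 = gram_inv[OF A1c A1ij nl, folded P_def]
  have Pc: "P \<in> carrier_mat n n" using G1(3) .
  define z where "z = (\<lambda>j. \<Sum>k<n. P $$ (k,j) *\<^sub>R r k)"
  have PA_ij: "(\<Sum>j<n. P $$ (k,j) * inner (u j) (u i)) + real n * lam * P $$ (k,i) = (if k = i then 1 else 0)"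
    if "k < n" "i < n" for k i
  proof -
    have "(P * A1) $$ (k,i) = (\<Sum>j<n. P $$ (k,j) * A1 $$ (j,i))"
      by (rule mult_index_sum[OF Pc A1c that])
    also have "\<dots> = (\<Sum>j<n. P $$ (k,j) * inner (u j) (u i) + (if j = i then real n * lam * P $$ (k,i) else 0))"
      by (intro sum.cong refl) (use that in \<open>auto simp: A1ij distrib_left\<close>)
    also have "\<dots> = (\<Sum>j<n. P $$ (k,j) * inner (u j) (u i)) + real n * lam * P $$ (k,i)"
      using that by (simp add: sum.distrib)
    finally show ?thesis using G1(2) that by simp
  qed
  have zeq: "(real n * lam) *\<^sub>R z i + (\<Sum>j<n. inner (u j) (u i) *\<^sub>R z j) = r i" if "i < n" for i
  proof -
    have a1: "(real n * lam) *\<^sub>R z i = (\<Sum>k<n. (real n * lam * P $$ (k,i)) *\<^sub>R r k)"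
      unfolding z_def by (simp add: scaleR_sum_right)
    have "(\<Sum>j<n. inner (u j) (u i) *\<^sub>R z j) = (\<Sum>j<n. \<Sum>k<n. (inner (u j) (u i) * P $$ (k,j)) *\<^sub>R r k)"
      unfolding z_def by (simp add: scaleR_sum_right)
    also have "\<dots> = (\<Sum>k<n. \<Sum>j<n. (inner (u j) (u i) * P $$ (k,j)) *\<^sub>R r k)"
      by (rule sum.swap)
    also have "\<dots> = (\<Sum>k<n. (\<Sum>j<n. P $$ (k,j) * inner (u j) (u i)) *\<^sub>R r k)"
      by (simp add: scaleR_sum_left mult.commute)
    finally have a2: "(\<Sum>j<n. inner (u j) (u i) *\<^sub>R z j) = \<dots>" .
    have "(real n * lam) *\<^sub>R z i + (\<Sum>j<n. inner (u j) (u i) *\<^sub>R z j)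
        = (\<Sum>k<n. ((\<Sum>j<n. P $$ (k,j) * inner (u j) (u i)) + real n * lam * P $$ (k,i)) *\<^sub>R r k)"
      unfolding a1 a2 by (simp add: scaleR_add_left sum.distrib)
    also have "\<dots> = (\<Sum>k<n. (if k = i then 1 else 0) *\<^sub>R r k)"
      by (intro sum.cong refl) (use that PA_ij in auto)
    also have "\<dots> = (\<Sum>k<n. if k = i then r k else 0)" by (intro sum.cong refl) simp
    also have "\<dots> = r i" using that by simp
    finally show ?thesis .
  qed
  define C0 where "C0 = (\<lambda>x. \<Sum>j<n. inner (u j) x *\<^sub>R z j)"
  have obj_eq: "stage1_obj phiW phiAY n w a y lam C = (1 / real n) * (\<Sum>i<n. (norm (r i - C (u i)))\<^sup>2) + lam * hs_norm_sq C" for C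
    unfolding stage1_obj_def r_def u_def by simp
  have hsC0: "hilbert_schmidt C0" unfolding C0_def
    by (rule stage1_abstract(1)[of n lam z u r]) (use n_pos reg zeq in auto)
  have minC0: "stage1_obj phiW phiAY n w a y lam C0 \<le> stage1_obj phiW phiAY n w a y lam C'" if "hilbert_schmidt C'" for C'
    unfolding obj_eq C0_def
    by (rule stage1_abstract(2)[of n lam z u r]) (use n_pos reg zeq that in auto)
  have uniq: "C = C0" if "hilbert_schmidt C" "\<forall>C'. hilbert_schmidt C' \<longrightarrow> stage1_obj phiW phiAY n w a y lam C \<le> stage1_obj phiW phiAY n w a y lam C'" for C
  proof -
    have le: "stage1_obj phiW phiAY n w a y lam C \<le> stage1_obj phiW phiAY n w a y lam C0" using that(2) hsC0 by blast
    show ?thesis unfolding C0_def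
      by (rule stage1_abstract(3)[of n lam z u r]) (use n_pos reg zeq that(1) le[unfolded obj_eq C0_def] in auto)
  qed
  have Lc: "L \<in> carrier_mat n m" unfolding L_def hadamard_mat_def kmat_def by auto
  have Bc: "Bm \<in> carrier_mat n m" unfolding Bm_eq using Pc Lc by simp
  have Lij: "L $$ (j,l) = inner (u j) (v l)" if "j < n" "l < m" for j l
    using that unfolding L_def by (simp add: hadamard_mat_def kmat_def u_def v_def ipAY)
  have Bij: "Bm $$ (k,l) = (\<Sum>j<n. P $$ (k,j) * inner (u j) (v l))" if "k < n" "l < m" for k l
    unfolding Bm_eq mult_index_sum[OF Pc Lc that] using that by (simp add: Lij)
  define g where "g = (\<lambda>l. \<Sum>k<n. Bm $$ (k,l) *\<^sub>R r k)"
  have C0v: "C0 (v l) = g l" if "l < m" for l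
  proof -
    have "C0 (v l) = (\<Sum>j<n. \<Sum>k<n. (inner (u j) (v l) * P $$ (k,j)) *\<^sub>R r k)"
      unfolding C0_def z_def by (simp add: scaleR_sum_right)
    also have "\<dots> = (\<Sum>k<n. \<Sum>j<n. (inner (u j) (v l) * P $$ (k,j)) *\<^sub>R r k)"
      by (rule sum.swap)
    also have "\<dots> = (\<Sum>k<n. (\<Sum>j<n. P $$ (k,j) * inner (u j) (v l)) *\<^sub>R r k)"
      by (simp add: scaleR_sum_left mult.commute)
    also have "\<dots> = g l" unfolding g_def using that by (intro sum.cong refl) (simp add: Bij)
    finally show ?thesis .
  qed
  define psi where "psi = (\<lambda>l. tensAW (phiA (ad l)) (C0 (v l)))"
  define KW where "KW = kmat kW n w n w"
  have KWc: "KW \<in> carrier_mat n n" unfolding KW_def by (rule kmat_carrier)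
  have BTc: "transpose_mat Bm \<in> carrier_mat m n" using Bc by simp
  have ipg: "inner (g i) (g j) = (transpose_mat Bm * KW * Bm) $$ (i,j)" if "i < m" "j < m" for i j
  proof -
    have "(transpose_mat Bm * KW * Bm) $$ (i,j) = (\<Sum>l<n. (transpose_mat Bm * KW) $$ (i,l) * Bm $$ (l,j))"
      by (rule mult_index_sum[OF mult_carrier_mat[OF BTc KWc] Bc that])
    also have "\<dots> = (\<Sum>l<n. (\<Sum>k<n. Bm $$ (k,i) * kW (w k) (w l)) * Bm $$ (l,j))"
    proof (intro sum.cong refl)
      fix l assume l: "l \<in> {..<n}"
      have "(transpose_mat Bm * KW) $$ (i,l) = (\<Sum>k<n. transpose_mat Bm $$ (i,k) * KW $$ (k,l))"
        by (rule mult_index_sum[OF BTc KWc]) (use that l in auto)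
      also have "\<dots> = (\<Sum>k<n. Bm $$ (k,i) * kW (w k) (w l))"
        using that l Bc by (intro sum.cong refl) (auto simp: KW_def kmat_index)
      finally show "(transpose_mat Bm * KW) $$ (i,l) * Bm $$ (l,j) = (\<Sum>k<n. Bm $$ (k,i) * kW (w k) (w l)) * Bm $$ (l,j)"
        by simp
    qed
    also have "\<dots> = inner (g i) (g j)"
      unfolding g_def inner_sum_left inner_sum_right
      by (simp add: sum_distrib_left sum_distrib_right r_def ipW mult_ac)
    finally show ?thesis by simp
  qed
  define A2 where "A2 = M_matrix kA kW n w m ad Bm + (real m * \<eta>) \<cdot>\<^sub>m 1\<^sub>m m"
  have A2c: "A2 \<in> carrier_mat m m" unfolding A2_def M_matrix_def hadamard_mat_def kmat_def by auto
  have A2ij: "A2 $$ (i,j) = inner (psi i) (psi j) + (if i = j then real m * \<eta> else 0)" if "i < m" "j < m" for i j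
  proof -
    have "A2 $$ (i,j) = kA (ad i) (ad j) * (transpose_mat Bm * KW * Bm) $$ (i,j) + (if i = j then real m * \<eta> else 0)"
      using that unfolding A2_def M_matrix_def KW_def by (simp add: hadamard_mat_def kmat_def)
    also have "\<dots> = inner (psi i) (psi j) + (if i = j then real m * \<eta> else 0)"
      using that unfolding psi_def by (simp add: tAW ipA C0v ipg)
    finally show ?thesis .
  qed
  have me: "real m * \<eta> > 0" using m_pos reg by simp
  note G2 = gram_inv[OF A2c A2ij me]
  define al where "al = mat_inv A2 *\<^sub>v vec m yd"
  have al_eq: "\<alpha> = al" unfolding \<alpha>_def alpha_vec_def al_def A2_def Bm_def ..
  have alc: "al \<in> carrier_vec m" unfolding al_def using G2(3) by simp
  have A2al: "A2 *\<^sub>v al = vec m yd"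
  proof -
    have "A2 *\<^sub>v al = (A2 * mat_inv A2) *\<^sub>v vec m yd"
      unfolding al_def using assoc_mult_mat_vec[OF A2c G2(3) vec_carrier[of m yd]] by simp
    then show ?thesis using G2(1) by simp
  qed
  have aeq: "(\<Sum>j<m. inner (psi i) (psi j) * al $ j) + real m * \<eta> * al $ i = yd i" if "i < m" for i
  proof -
    have "yd i = (A2 *\<^sub>v al) $ i" using A2al that by simp
    also have "\<dots> = (\<Sum>j<m. A2 $$ (i,j) * al $ j)" by (rule mult_vec_index_sum[OF A2c alc that])
    also have "\<dots> = (\<Sum>j<m. inner (psi i) (psi j) * al $ j + (if j = i then real m * \<eta> * al $ i else 0))"
      by (intro sum.cong refl) (use that in \<open>auto simp: A2ij distrib_right\<close>)
    also have "\<dots> = (\<Sum>j<m. inner (psi i) (psi j) * al $ j) + real m * \<eta> * al $ i"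
      using that by (simp add: sum.distrib)
    finally show ?thesis by simp
  qed
  define h0 where "h0 = (\<Sum>j<m. al $ j *\<^sub>R psi j)"
  have S2a: "(1 / real m) * (\<Sum>i<m. (yd i - inner h0 (psi i))\<^sup>2) + \<eta> * (norm h0)\<^sup>2 \<le> (1 / real m) * (\<Sum>i<m. (yd i - inner h (psi i))\<^sup>2) + \<eta> * (norm h)\<^sup>2" for h
    unfolding h0_def by (rule stage2_abstract(1)[of m \<eta> psi "\<lambda>j. al $ j" yd]) (use m_pos reg aeq in auto)
  have S2b: "h = h0" if "(1 / real m) * (\<Sum>i<m. (yd i - inner h (psi i))\<^sup>2) + \<eta> * (norm h)\<^sup>2 \<le> (1 / real m) * (\<Sum>i<m. (yd i - inner h0 (psi i))\<^sup>2) + \<eta> * (norm h0)\<^sup>2" for h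
    unfolding h0_def by (rule stage2_abstract(2)[of m \<eta> psi "\<lambda>j. al $ j" yd]) (use m_pos reg aeq that[unfolded h0_def] in auto)
  have obj2: "stage2_obj phiA phiAY tensAW C0 m ad yd \<eta> h = (1 / real m) * (\<Sum>i<m. (yd i - inner h (psi i))\<^sup>2) + \<eta> * (norm h)\<^sup>2" for h
    unfolding stage2_obj_def psi_def v_def by simp
  have val: "inner h0 (tensAW (phiA a0) (phiW w0)) = \<alpha> \<bullet> (kvec kA m ad a0 \<odot>\<^sub>v (transpose_mat Bm *\<^sub>v kvec kW n w w0))" for a0 w0
  proof -
    have kvc: "kvec kW n w w0 \<in> carrier_vec n" by (rule kvec_carrier)
    have BT: "(\<Sum>l<n. transpose_mat Bm $$ (x, l) * kW (w l) w0) = (\<Sum>k<n. Bm $$ (k, x) * kW (w k) w0)" if "x < m" for x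
      by (intro sum.cong refl) (use Bc that in auto)
    have "\<alpha> \<bullet> (kvec kA m ad a0 \<odot>\<^sub>v (transpose_mat Bm *\<^sub>v kvec kW n w w0))
        = (\<Sum>j<m. al $ j * (kA (ad j) a0 * (\<Sum>k<n. Bm $$ (k,j) * kW (w k) w0)))"
      unfolding al_eq
      by (subst scalar_prod_sum[OF alc hadamard_vec_carrier[OF kvec_carrier]])
         (intro sum.cong refl, simp add: hadamard_vec_index[OF kvec_carrier] kvec_index mult_vec_index_sum[OF BTc kvc] BT)
    also have "\<dots> = inner h0 (tensAW (phiA a0) (phiW w0))"
      unfolding h0_def inner_sum_left
      by (intro sum.cong refl) (simp add: psi_def tAW ipA C0v g_def inner_sum_left r_def ipW)
    finally show ?thesis by simp
  qed
  show ?thesis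
  proof (intro conjI allI impI)
    show "\<exists>C. hilbert_schmidt C \<and> (\<forall>C'. hilbert_schmidt C' \<longrightarrow> stage1_obj phiW phiAY n w a y lam C \<le> stage1_obj phiW phiAY n w a y lam C')"
      using hsC0 minC0 by blast
  next
    fix C assume H: "hilbert_schmidt C \<and> (\<forall>C'. hilbert_schmidt C' \<longrightarrow> stage1_obj phiW phiAY n w a y lam C \<le> stage1_obj phiW phiAY n w a y lam C')"
    then have CC0: "C = C0" using uniq by blast
    show "\<exists>h. \<forall>h'. stage2_obj phiA phiAY tensAW C m ad yd \<eta> h \<le> stage2_obj phiA phiAY tensAW C m ad yd \<eta> h'"
      unfolding CC0 obj2 using S2a by blast
  next
    fix C h a0 w0
    assume H: "hilbert_schmidt C \<and> (\<forall>C'. hilbert_schmidt C' \<longrightarrow> stage1_obj phiW phiAY n w a y lam C \<le> stage1_obj phiW phiAY n w a y lam C')"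
      and Hh: "\<forall>h'. stage2_obj phiA phiAY tensAW C m ad yd \<eta> h \<le> stage2_obj phiA phiAY tensAW C m ad yd \<eta> h'"
    then have CC0: "C = C0" using uniq by blast
    have "h = h0" using Hh S2b unfolding CC0 obj2 by blast
    then show "inner h (tensAW (phiA a0) (phiW w0)) = \<alpha> \<bullet> (kvec kA m ad a0 \<odot>\<^sub>v (transpose_mat Bm *\<^sub>v kvec kW n w w0))"
      using val by simp
  qed
qed

end
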